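(* Let $\mathfrak{g}$ be a symmetric social storage network on $N$ agents with stability point $\hat\eta$, which has evolved from the null network. Suppose $\hat\eta$ is odd and $\mathfrak{g}$ has $\kappa\ge2$ connected components. Suppose at least two of the components each have either at most $\hat\eta$ agents, or an odd number of agents greater than $\hat\eta$. Then $\mathfrak{g}$ is not bilaterally stable.
   Context: A network is a simple undirected graph on a finite set $\mathbf{A}$ of $N$ agents, and $\eta_i(\mathfrak{g})$ is the degree (neighbourhood size) of $i$. Parameters are: disk failure rate $\lambda\in(0,1)$, per-link cost $c$, data worths $\beta_i>0$, storage $s_i$, data size $d_i$ and budget $b_i$. Remaining storage is $RS_i=s_i-\sum_{j\text{ neighbour of }i}d_j$ and remaining budget is $RB_i=b_i-c\,\eta_i(\mathfrak{g})$. A symmetric social storage network is one of the following four types. (a) SVN with sufficient storage under the Multi-Objective Framework (MO): - $\beta_i=\beta$, with $\beta,\lambda,c\in(0,1)$; - $s_i\ge\sum_{j\ne i}d_j$; - $u_i=\beta(1-\lambda^{\eta_i})-c\eta_i$; - it is assumed that $c<\beta(1-\lambda)$ and $L=|\ln(c/(\beta(1-\lambda)))|/|\ln\lambda|$ is not an integer; the stability point is $\hat\eta=\lceil L\rceil$. (b) SV-SRN under MO: - as in (a) but with $s_i=s$ and $d_i=d$ (with $s/d$ an integer) instead of sufficient storage; - the stability point is $\hat\eta=\min\{\lceil L\rceil,s/d\}$. (c) SVN with sufficient storage and budget under the Single-Objective Framework (SO): - $\beta_i=\beta$; - $s_i\ge\sum_{j\ne i}d_j$ and $b_i\ge c(N-1)$;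 - $u_i=\beta(1-\lambda^{\eta_i})$; - the stability point is $\hat\eta=N-1$. (d) SRN under SO: - $s_i=s$, $d_i=d$, $b_i=b$ (with $s/d$ and $b/c$ integers); - $u_i=\beta_i(1-\lambda^{\eta_i})$; - the stability point is $\hat\eta=\min\{s/d,b/c\}$. Agent $i$ is willing to add the link $\langle ij\rangle$ if $u_i(\mathfrak{g}+\langle ij\rangle)>u_i(\mathfrak{g})$, together with $RS_j\ge d_i$ in types (b) and (d), and additionally $RB_i\ge c$ in type (d). Bilateral stability means both of the following hold. 1. For every link $\langle ij\rangle$: if $u_i(\mathfrak{g}-\langle ij\rangle)>u_i(\mathfrak{g})$, then $u_j(\mathfrak{g}-\langle ij\rangle)<u_j(\mathfrak{g})$. 2. For every non-link $\langle ij\rangle$: if $i$ is willing to add $\langle ij\rangle$, then $j$ is not willing to add $\langle ij\rangle$. $\mathfrak{g}$ has evolved from the null network if it is obtained from the network with no links by a finite sequence of single link additions $\langle ij\rangle$, each performed only when both $i$ and $j$ are willing to add it at that moment. *)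

theory Defs
  imports Complex_Main
begin

text \<open>SVN_MO: SVN with sufficient storage under MO; SVSRN_MO: SV-SRN under MO;
  SVN_SO: SVN with sufficient storage and budget under SO; SRN_SO: SRN under SO.\<close>
datatype ntype = SVN_MO | SVSRN_MO | SVN_SO | SRN_SO

record 'a ssn =
  agents :: "'a set"
  lam    :: real
  cost   :: real
  beta   :: "'a \<Rightarrow> real"
  stor   :: "'a \<Rightarrow> real"
  dsize  :: "'a \<Rightarrow> real"
  budget :: "'a \<Rightarrow> real"
  kind   :: ntype

text \<open>A network is a symmetric irreflexive relation on the agents (a link <ij> is
  represented by both pairs (i,j) and (j,i)).\<close>
definition is_network :: "'a ssn \<Rightarrow> ('a \<times> 'a) set \<Rightarrow> bool" where
  "is_network P E \<longleftrightarrow> E \<subseteq> agents P \<times> agents P \<and> sym E \<and> irrefl E"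

definition nbrs :: "'a ssn \<Rightarrow> ('a \<times> 'a) set \<Rightarrow> 'a \<Rightarrow> 'a set" where
  "nbrs P E i = {j \<in> agents P. (i, j) \<in> E}"

definition deg :: "'a ssn \<Rightarrow> ('a \<times> 'a) set \<Rightarrow> 'a \<Rightarrow> nat" where
  "deg P E i = card (nbrs P E i)"

definition RS :: "'a ssn \<Rightarrow> ('a \<times> 'a) set \<Rightarrow> 'a \<Rightarrow> real" where
  "RS P E i = stor P i - (\<Sum>j\<in>nbrs P E i. dsize P j)"

definition RB :: "'a ssn \<Rightarrow> ('a \<times> 'a) set \<Rightarrow> 'a \<Rightarrow> real" where
  "RB P E i = budget P i - cost P * real (deg P E i)"

definition util :: "'a ssn \<Rightarrow> ('a \<times> 'a) set \<Rightarrow> 'a \<Rightarrow> real" where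
  "util P E i =
     (if kind P \<in> {SVN_MO, SVSRN_MO}
      then beta P i * (1 - lam P ^ deg P E i) - cost P * real (deg P E i)
      else beta P i * (1 - lam P ^ deg P E i))"

definition add_link :: "('a \<times> 'a) set \<Rightarrow> 'a \<Rightarrow> 'a \<Rightarrow> ('a \<times> 'a) set" where
  "add_link E i j = E \<union> {(i, j), (j, i)}"

definition del_link :: "('a \<times> 'a) set \<Rightarrow> 'a \<Rightarrow> 'a \<Rightarrow> ('a \<times> 'a) set" where
  "del_link E i j = E - {(i, j), (j, i)}"

definition willing :: "'a ssn \<Rightarrow> ('a \<times> 'a) set \<Rightarrow> 'a \<Rightarrow> 'a \<Rightarrow> bool" where
  "willing P E i j \<longleftrightarrow>
     util P (add_link E i j) i > util P E i
     \<and> (kind P \<in> {SVSRN_MO, SRN_SO} \<longrightarrow> RS P E j \<ge> dsize P i)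
     \<and> (kind P = SRN_SO \<longrightarrow> RB P E i \<ge> cost P)"

definition bilat_stable :: "'a ssn \<Rightarrow> ('a \<times> 'a) set \<Rightarrow> bool" where
  "bilat_stable P E \<longleftrightarrow>
     (\<forall>i j. (i, j) \<in> E \<longrightarrow>
        util P (del_link E i j) i > util P E i \<longrightarrow> util P (del_link E i j) j < util P E j)
   \<and> (\<forall>i\<in>agents P. \<forall>j\<in>agents P. i \<noteq> j \<longrightarrow> (i, j) \<notin> E \<longrightarrow>
        willing P E i j \<longrightarrow> \<not> willing P E j i)"

inductive evolved :: "'a ssn \<Rightarrow> ('a \<times> 'a) set \<Rightarrow> bool" for P where
  null: "evolved P {}"
| step: "\<lbrakk> evolved P E; i \<in> agents P; j \<in> agents P; i \<noteq> j; (i, j) \<notin> E;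
           willing P E i j; willing P E j i \<rbrakk> \<Longrightarrow> evolved P (add_link E i j)"

definition components :: "'a ssn \<Rightarrow> ('a \<times> 'a) set \<Rightarrow> 'a set set" where
  "components P E = (\<lambda>i. {j \<in> agents P. (i, j) \<in> E\<^sup>*}) ` agents P"

definition Lval :: "real \<Rightarrow> real \<Rightarrow> real \<Rightarrow> real" where
  "Lval lm c b = \<bar>ln (c / (b * (1 - lm)))\<bar> / \<bar>ln lm\<bar>"

definition sym_ssn :: "'a ssn \<Rightarrow> nat \<Rightarrow> bool" where
  "sym_ssn P eta \<longleftrightarrow>
     finite (agents P) \<and> 0 < lam P \<and> lam P < 1 \<and> 0 < cost P \<and>
     (\<forall>i\<in>agents P. beta P i > 0) \<and>
     (case kind P of
        SVN_MO \<Rightarrow> (\<exists>b. (\<forall>i\<in>agents P. beta P i = b) \<and> b < 1 \<and> cost P < 1 \<and>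
             (\<forall>i\<in>agents P. stor P i \<ge> (\<Sum>j\<in>agents P - {i}. dsize P j)) \<and>
             cost P < b * (1 - lam P) \<and> Lval (lam P) (cost P) b \<notin> \<int> \<and>
             int eta = \<lceil>Lval (lam P) (cost P) b\<rceil>)
      | SVSRN_MO \<Rightarrow> (\<exists>b s d (k::nat). (\<forall>i\<in>agents P. beta P i = b) \<and> b < 1 \<and> cost P < 1 \<and>
             (\<forall>i\<in>agents P. stor P i = s \<and> dsize P i = d) \<and> d > 0 \<and> s = real k * d \<and>
             cost P < b * (1 - lam P) \<and> Lval (lam P) (cost P) b \<notin> \<int> \<and>
             eta = min (nat \<lceil>Lval (lam P) (cost P) b\<rceil>) k)
      | SVN_SO \<Rightarrow> (\<exists>b. (\<forall>i\<in>agents P. beta P i = b) \<and>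
             (\<forall>i\<in>agents P. stor P i \<ge> (\<Sum>j\<in>agents P - {i}. dsize P j)) \<and>
             (\<forall>i\<in>agents P. budget P i \<ge> cost P * (real (card (agents P)) - 1)) \<and>
             eta = card (agents P) - 1)
      | SRN_SO \<Rightarrow> (\<exists>s d bu (k::nat) (m::nat).
             (\<forall>i\<in>agents P. stor P i = s \<and> dsize P i = d \<and> budget P i = bu) \<and>
             d > 0 \<and> s = real k * d \<and> bu = real m * cost P \<and> eta = min k m))"

end

theory Submission
  imports Defs
begin



lemma mo_gain:
  fixes lm c b :: real and d :: nat
  assumes "0<lm" "lm<1" "0<c" "c < b*(1-lm)"
  shows "b*(1-lm^Suc d) - c*real(Suc d) > b*(1-lm^d) - c * real d \<longleftrightarrow> real d < Lval lm c b"
proof -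
  have b: "b > 0" using assms by (smt (verit) mult_nonpos_nonneg)
  define r where "r = c/(b*(1-lm))"
  have r0: "r > 0" "r < 1" using assms b by (auto simp: r_def field_simps)
  have "b*(1-lm^Suc d) - c*real(Suc d) > b*(1-lm^d) - c * real d \<longleftrightarrow> c < (b*(1-lm)) * lm^d"
    by (simp add: algebra_simps)
  also have "\<dots> \<longleftrightarrow> r < lm^d" using assms b by (simp add: r_def pos_divide_less_eq mult.commute)
  also have "\<dots> \<longleftrightarrow> ln r < ln (lm^d)" using r0 assms by simp
  also have "\<dots> \<longleftrightarrow> ln r < real d * ln lm" using assms by (simp add: ln_realpow)
  also have "\<dots> \<longleftrightarrow> real d < ln r / ln lm" using assms by (simp add: neg_less_divide_eq)
  also have "ln r / ln lm = Lval lm c b"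
  proof -
    have "ln r < 0" "ln lm < 0" using r0 assms by auto
    then show ?thesis unfolding Lval_def r_def[symmetric] by simp
  qed
  finally show ?thesis .
qed

lemma even_sym_card:
  assumes "finite R" "sym R" "irrefl R" shows "even (card R)"
  using assms
proof (induction R rule: finite_psubset_induct)
  case (psubset R)
  show ?case
  proof (cases "R = {}")
    case True then show ?thesis by simp
  next
    case False
    then obtain a b where ab: "(a,b) \<in> R" by auto
    have ba: "(b,a) \<in> R" using ab psubset.prems by (meson symD)
    have ne: "a \<noteq> b" using ab psubset.prems by (auto simp: irrefl_def)
    define R' where "R' = R - {(a,b),(b,a)}"
    have "R' \<subset> R" using ab unfolding R'_def by auto
    moreover have "sym R'" using psubset.prems unfolding R'_def sym_def by auto
    moreover have "irrefl R'" using psubset.prems unfolding R'_def irrefl_def by auto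
    ultimately have "even (card R')" using psubset.IH by blast
    moreover have "card R = card R' + 2"
    proof -
      have "R = R' \<union> {(a,b),(b,a)}" "R' \<inter> {(a,b),(b,a)} = {}" using ab ba unfolding R'_def by auto
      then have "card R = card R' + card {(a,b),(b,a)}"
        using psubset.hyps by (metis card_Un_disjoint finite_Un finite.intros)
      then show ?thesis using ne by simp
    qed
    ultimately show ?thesis by simp
  qed
qed



lemma nbrs_add_i:
  assumes "i \<noteq> j" "j \<in> agents P"
  shows "nbrs P (add_link E i j) i = insert j (nbrs P E i)"
  using assms unfolding nbrs_def add_link_def by auto

lemma add_link_comm: "add_link E i j = add_link E j i"
  unfolding add_link_def by auto

lemma nbrs_add_other:
  assumes "l \<noteq> i" "l \<noteq> j"
  shows "nbrs P (add_link E i j) l = nbrs P E l"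
  using assms unfolding nbrs_def add_link_def by auto

lemma deg_add_i:
  assumes "finite (agents P)" "i \<noteq> j" "j \<in> agents P" "(i,j) \<notin> E"
  shows "deg P (add_link E i j) i = Suc (deg P E i)"
proof -
  have "finite (nbrs P E i)" using assms(1) unfolding nbrs_def by auto
  moreover have "j \<notin> nbrs P E i" using assms unfolding nbrs_def by auto
  ultimately show ?thesis unfolding deg_def nbrs_add_i[OF assms(2,3)] by simp
qed

lemma deg_le_N:
  assumes "finite (agents P)" "is_network P E"
  shows "deg P E i \<le> card (agents P) - 1"
proof (cases "i \<in> agents P")
  case True
  have "nbrs P E i \<subseteq> agents P - {i}" using assms(2) unfolding nbrs_def is_network_def irrefl_def by auto
  then have "deg P E i \<le> card (agents P - {i})" unfolding deg_def using assms(1) by (simp add: card_mono)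
  then show ?thesis using True assms(1) by simp
next
  case False
  have "nbrs P E i = {}" using assms(2) False unfolding nbrs_def is_network_def by auto
  then show ?thesis by (simp add: deg_def)
qed

lemma sum_nbrs_const:
  assumes "\<forall>l\<in>agents P. dsize P l = d"
  shows "(\<Sum>l\<in>nbrs P E j. dsize P l) = real (deg P E j) * d"
proof -
  have "(\<Sum>l\<in>nbrs P E j. dsize P l) = (\<Sum>l\<in>nbrs P E j. d)"
    using assms by (intro sum.cong) (auto simp: nbrs_def)
  then show ?thesis by (simp add: deg_def)
qed


lemma mo_cost:
  assumes "sym_ssn P eta" "kind P \<in> {SVN_MO, SVSRN_MO}" "i \<in> agents P"
  shows "cost P < beta P i * (1 - lam P)"
proof (cases "kind P = SVN_MO")
  case True
  then obtain b where "\<forall>i\<in>agents P. beta P i = b" "cost P < b * (1 - lam P)"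
    using assms(1) unfolding sym_ssn_def by auto
  then show ?thesis using assms(3) by simp
next
  case False
  then have k: "kind P = SVSRN_MO" using assms(2) by simp
  then obtain b where "\<forall>i\<in>agents P. beta P i = b" "cost P < b * (1 - lam P)"
    using assms(1) unfolding sym_ssn_def by auto
  then show ?thesis using assms(3) by simp
qed


lemma ssn_basic0:
  assumes "sym_ssn P eta"
  shows "finite (agents P) \<and> 0 < lam P \<and> lam P < 1 \<and> 0 < cost P \<and> (\<forall>i\<in>agents P. beta P i > 0)"
  using assms unfolding sym_ssn_def by (elim conjE) (intro conjI)

lemma ssn_basic:
  assumes "sym_ssn P eta"
  shows "finite (agents P)" "0 < lam P" "lam P < 1" "0 < cost P" "\<forall>i\<in>agents P. beta P i > 0"
  using ssn_basic0[OF assms] by auto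

lemma util_gain:
  assumes "sym_ssn P eta" "i \<in> agents P" "j \<in> agents P" "i \<noteq> j" "(i,j) \<notin> E"
  shows "util P (add_link E i j) i > util P E i \<longleftrightarrow>
    (kind P \<in> {SVN_MO, SVSRN_MO} \<longrightarrow> real (deg P E i) < Lval (lam P) (cost P) (beta P i))"
proof -
  note b = ssn_basic[OF assms(1)]
  have l: "0 < lam P" "lam P < 1" and c: "0 < cost P" using b by auto
  have bp: "beta P i > 0" using b assms(2) by auto
  have dg: "deg P (add_link E i j) i = Suc (deg P E i)" by (rule deg_add_i[OF b(1) assms(4,3,5)])
  show ?thesis
  proof (cases "kind P \<in> {SVN_MO, SVSRN_MO}")
    case True
    have cc: "cost P < beta P i * (1 - lam P)" by (rule mo_cost[OF assms(1) True assms(2)])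
    have "util P (add_link E i j) i = beta P i * (1 - lam P ^ Suc (deg P E i)) - cost P * real (Suc (deg P E i))"
      using True unfolding util_def dg by simp
    moreover have "util P E i = beta P i * (1 - lam P ^ (deg P E i)) - cost P * real (deg P E i)"
      using True unfolding util_def by simp
    ultimately show ?thesis using True mo_gain[OF l c cc] by simp
  next
    case False
    have "lam P ^ Suc (deg P E i) < lam P ^ deg P E i" using l by simp
    then have "beta P i * (1 - lam P ^ deg P E i) < beta P i * (1 - lam P ^ Suc (deg P E i))"
      using bp by simp
    then show ?thesis using False unfolding util_def dg by simp
  qed
qed



lemma rs_iff:
  assumes "\<forall>l\<in>agents P. stor P l = s \<and> dsize P l = d" "d > 0" "s = real k * d"
    "i \<in> agents P" "j \<in> agents P"
  shows "RS P E j \<ge> dsize P i \<longleftrightarrow> deg P E j < k"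
proof -
  have ds: "\<forall>l\<in>agents P. dsize P l = d" using assms(1) by auto
  have "RS P E j = real k * d - real (deg P E j) * d"
    unfolding RS_def sum_nbrs_const[OF ds] using assms by simp
  moreover have "dsize P i = d" using assms by simp
  ultimately have "RS P E j \<ge> dsize P i \<longleftrightarrow> d + real (deg P E j) * d \<le> real k * d"
    by linarith
  also have "\<dots> \<longleftrightarrow> (real (deg P E j) + 1) * d \<le> real k * d" by (simp add: algebra_simps)
  also have "\<dots> \<longleftrightarrow> real (deg P E j) + 1 \<le> real k" using assms(2) by simp
  also have "\<dots> \<longleftrightarrow> deg P E j < k" by linarith
  finally show ?thesis .
qed

lemma rb_iff:
  assumes "budget P i = real m * cost P" "cost P > 0"
  shows "RB P E i \<ge> cost P \<longleftrightarrow> deg P E i < m"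
proof -
  have "RB P E i \<ge> cost P \<longleftrightarrow> (real (deg P E i) + 1) * cost P \<le> real m * cost P"
    unfolding RB_def assms(1) by (simp add: algebra_simps)
  also have "\<dots> \<longleftrightarrow> real (deg P E i) + 1 \<le> real m" using assms(2) by simp
  also have "\<dots> \<longleftrightarrow> deg P E i < m" by linarith
  finally show ?thesis .
qed

lemma nat_lt_ceil: "(d < nat \<lceil>L\<rceil>) \<longleftrightarrow> real d < L"
  by (metis less_ceiling_iff of_int_of_nat_eq zless_nat_eq_int_zless)

lemma willing_low:
  assumes "sym_ssn P eta" "i \<in> agents P" "j \<in> agents P" "i \<noteq> j" "(i,j) \<notin> E"
    "deg P E i < eta" "deg P E j < eta"
  shows "willing P E i j"
proof -
  note b = ssn_basic[OF assms(1)]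
  note g = util_gain[OF assms(1-5)]
  show ?thesis
  proof (cases "kind P")
    case SVN_MO
    then obtain bb where bb: "\<forall>i\<in>agents P. beta P i = bb" "int eta = \<lceil>Lval (lam P) (cost P) bb\<rceil>"
      using assms(1) unfolding sym_ssn_def by auto
    have "real (deg P E i) < Lval (lam P) (cost P) (beta P i)"
      using bb assms(2,6) less_ceiling_iff by (metis of_int_of_nat_eq of_nat_less_iff)
    then show ?thesis unfolding willing_def using g SVN_MO by simp
  next
    case SVSRN_MO
    then obtain bb s d k where bb: "\<forall>i\<in>agents P. beta P i = bb"
      "\<forall>i\<in>agents P. stor P i = s \<and> dsize P i = d" "d > 0" "s = real k * d"
      "eta = min (nat \<lceil>Lval (lam P) (cost P) bb\<rceil>) k"
      using assms(1) unfolding sym_ssn_def by auto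
    have "real (deg P E i) < Lval (lam P) (cost P) (beta P i)"
      using bb(1,5) assms(2,6) nat_lt_ceil by simp
    moreover have "RS P E j \<ge> dsize P i" using rs_iff[OF bb(2-4) assms(2,3)] bb(5) assms(7) by simp
    ultimately show ?thesis unfolding willing_def using g SVSRN_MO by simp
  next
    case SVN_SO
    then show ?thesis unfolding willing_def using g by simp
  next
    case SRN_SO
    then have "\<exists>s d bu (k::nat) (m::nat).
      (\<forall>i\<in>agents P. stor P i = s \<and> dsize P i = d \<and> budget P i = bu) \<and>
      d > 0 \<and> s = real k * d \<and> bu = real m * cost P \<and> eta = min k m"
      using assms(1) unfolding sym_ssn_def by simp
    then obtain s d bu k m where bb:
      "\<forall>i\<in>agents P. stor P i = s \<and> dsize P i = d \<and> budget P i = bu"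
      "d > 0" "s = real k * d" "bu = real m * cost P" "eta = min k m"
      by blast
    have sd: "\<forall>i\<in>agents P. stor P i = s \<and> dsize P i = d" using bb(1) by auto
    have "RS P E j \<ge> dsize P i" using rs_iff[OF sd bb(2,3) assms(2,3)] bb(5) assms(7) by simp
    moreover have "RB P E i \<ge> cost P" using rb_iff[of P i m E] bb(1,4,5) assms(2,6) b(4) by simp
    ultimately show ?thesis unfolding willing_def using g SRN_SO by simp
  qed
qed

lemma willing_high:
  assumes "sym_ssn P eta" "i \<in> agents P" "j \<in> agents P" "i \<noteq> j" "(i,j) \<notin> E"
    "willing P E i j" "willing P E j i" "kind P \<noteq> SVN_SO"
  shows "deg P E i < eta"
proof -
  note b = ssn_basic[OF assms(1)]
  note g = util_gain[OF assms(1-5)]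
  have ji: "(j,i) \<notin> E \<or> True" by simp
  show ?thesis
  proof (cases "kind P")
    case SVN_MO
    then obtain bb where bb: "\<forall>i\<in>agents P. beta P i = bb" "int eta = \<lceil>Lval (lam P) (cost P) bb\<rceil>"
      using assms(1) unfolding sym_ssn_def by auto
    have "real (deg P E i) < Lval (lam P) (cost P) (beta P i)"
      using assms(6) g SVN_MO unfolding willing_def by simp
    then show ?thesis using bb assms(2) less_ceiling_iff by (metis of_int_of_nat_eq of_nat_less_iff)
  next
    case SVSRN_MO
    then obtain bb s d k where bb: "\<forall>i\<in>agents P. beta P i = bb"
      "\<forall>i\<in>agents P. stor P i = s \<and> dsize P i = d" "d > 0" "s = real k * d"
      "eta = min (nat \<lceil>Lval (lam P) (cost P) bb\<rceil>) k"
      using assms(1) unfolding sym_ssn_def by auto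
    have "real (deg P E i) < Lval (lam P) (cost P) (beta P i)"
      using assms(6) g SVSRN_MO unfolding willing_def by simp
    then have "deg P E i < nat \<lceil>Lval (lam P) (cost P) bb\<rceil>" using bb(1) assms(2) nat_lt_ceil by simp
    moreover have "RS P E i \<ge> dsize P j" using assms(7) SVSRN_MO unfolding willing_def by simp
    then have "deg P E i < k" using rs_iff[OF bb(2-4) assms(3,2)] by simp
    ultimately show ?thesis using bb(5) by simp
  next
    case SVN_SO
    then show ?thesis using assms(8) by simp
  next
    case SRN_SO
    then have "\<exists>s d bu (k::nat) (m::nat).
      (\<forall>i\<in>agents P. stor P i = s \<and> dsize P i = d \<and> budget P i = bu) \<and>
      d > 0 \<and> s = real k * d \<and> bu = real m * cost P \<and> eta = min k m"
      using assms(1) unfolding sym_ssn_def by simp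
    then obtain s d bu k m where bb:
      "\<forall>i\<in>agents P. stor P i = s \<and> dsize P i = d \<and> budget P i = bu"
      "d > 0" "s = real k * d" "bu = real m * cost P" "eta = min k m"
      by blast
    have sd: "\<forall>i\<in>agents P. stor P i = s \<and> dsize P i = d" using bb(1) by auto
    have "RS P E i \<ge> dsize P j" using assms(7) SRN_SO unfolding willing_def by simp
    then have "deg P E i < k" using rs_iff[OF sd bb(2,3) assms(3,2)] by simp
    moreover have "RB P E i \<ge> cost P" using assms(6) SRN_SO unfolding willing_def by simp
    then have "deg P E i < m" using rb_iff[of P i m E] bb(1,4) assms(2) b(4) by simp
    ultimately show ?thesis using bb(5) by simp
  qed
qed



lemma evolved_inv:
  assumes "sym_ssn P eta" "evolved P E"
  shows "is_network P E \<and> (\<forall>l\<in>agents P. deg P E l \<le> eta)"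
  using assms(2)
proof (induction rule: evolved.induct)
  case null
  show ?case unfolding is_network_def deg_def nbrs_def sym_def irrefl_def by simp
next
  case (step E i j)
  note b = ssn_basic[OF assms(1)]
  have net: "is_network P (add_link E i j)"
    using step unfolding is_network_def add_link_def sym_def irrefl_def by auto
  have ji: "(j,i) \<notin> E" using step unfolding is_network_def sym_def by blast
  have di: "deg P (add_link E i j) i \<le> eta"
  proof (cases "kind P = SVN_SO")
    case True
    then have "eta = card (agents P) - 1" using assms(1) unfolding sym_ssn_def by simp
    then show ?thesis using deg_le_N[OF b(1) net] by simp
  next
    case False
    have "deg P E i < eta" using willing_high[OF assms(1) step(2,3,4,5,6,7) False] .
    then show ?thesis using deg_add_i[OF b(1) step(4,3,5)] by simp
  qed
  have dj: "deg P (add_link E i j) j \<le> eta"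
  proof (cases "kind P = SVN_SO")
    case True
    then have "eta = card (agents P) - 1" using assms(1) unfolding sym_ssn_def by simp
    then show ?thesis using deg_le_N[OF b(1) net] by simp
  next
    case False
    have "deg P E j < eta" using willing_high[OF assms(1) step(3,2) _ ji step(7,6) False] step(4) by blast
    then show ?thesis using deg_add_i[OF b(1) _ step(2) ji] step(4) add_link_comm[of E i j] by simp
  qed
  have "\<forall>l\<in>agents P. deg P (add_link E i j) l \<le> eta"
  proof
    fix l assume l: "l \<in> agents P"
    show "deg P (add_link E i j) l \<le> eta"
    proof (cases "l = i \<or> l = j")
      case True then show ?thesis using di dj by auto
    next
      case False
      then have "deg P (add_link E i j) l = deg P E l" unfolding deg_def using nbrs_add_other by metis
      then show ?thesis using step.IH l by simp
    qed
  qed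
  then show ?case using net by simp
qed

definition comp :: "'a ssn \<Rightarrow> ('a \<times> 'a) set \<Rightarrow> 'a \<Rightarrow> 'a set" where
  "comp P E i = {j \<in> agents P. (i, j) \<in> E\<^sup>*}"

lemma comp_eq:
  assumes "sym E" "x \<in> comp P E a"
  shows "comp P E x = comp P E a"
proof -
  have ax: "(a,x) \<in> E\<^sup>*" using assms(2) unfolding comp_def by simp
  have xa: "(x,a) \<in> E\<^sup>*" using ax sym_rtrancl[OF assms(1)] by (meson symD)
  have "(x,y) \<in> E\<^sup>* \<longleftrightarrow> (a,y) \<in> E\<^sup>*" for y
    using ax xa by (meson rtrancl_trans)
  then show ?thesis unfolding comp_def by auto
qed

lemma comp_nbrs:
  assumes "j \<in> comp P E a" "l \<in> nbrs P E j"
  shows "l \<in> comp P E a"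
  using assms unfolding comp_def nbrs_def by (auto intro: rtrancl_into_rtrancl)

lemma comp_low:
  assumes "sym_ssn P eta" "is_network P E" "\<forall>l\<in>agents P. deg P E l \<le> eta" "odd eta"
    "a \<in> agents P" "C = comp P E a" "card C \<le> eta \<or> (odd (card C) \<and> card C > eta)"
  shows "\<exists>i\<in>C. deg P E i < eta"
proof -
  note b = ssn_basic[OF assms(1)]
  have net: "E \<subseteq> agents P \<times> agents P" "sym E" "irrefl E" using assms(2) unfolding is_network_def by auto
  have finC: "finite C" using b(1) assms(6) unfolding comp_def by auto
  have aC: "a \<in> C" using assms(5,6) unfolding comp_def by simp
  have CA: "C \<subseteq> agents P" using assms(6) unfolding comp_def by auto
  have sub: "nbrs P E j \<subseteq> C - {j}" if "j \<in> C" for j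
    using comp_nbrs[of j P E a] that assms(6) net(3) unfolding nbrs_def irrefl_def by auto
  have degC: "deg P E j \<le> card C - 1" if "j \<in> C" for j
  proof -
    have "deg P E j \<le> card (C - {j})" unfolding deg_def using sub[OF that] finC by (simp add: card_mono)
    then show ?thesis using that finC by simp
  qed
  show ?thesis
  proof (cases "card C \<le> eta")
    case True
    have "card C \<ge> 1" using aC finC by (metis One_nat_def Suc_leI card_gt_0_iff empty_iff)
    then show ?thesis using degC[OF aC] True aC by (intro bexI[of _ a]) auto
  next
    case False
    then have oddC: "odd (card C)" using assms(7) by simp
    show ?thesis
    proof (rule ccontr)
      assume "\<not> ?thesis"
      then have eq: "\<forall>j\<in>C. deg P E j = eta" using assms(3) CA by (meson not_less le_antisym subsetD)
      define R where "R = Sigma C (nbrs P E)"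
      have finN: "\<forall>j\<in>C. finite (nbrs P E j)" using b(1) unfolding nbrs_def by auto
      have "card R = (\<Sum>j\<in>C. card (nbrs P E j))" unfolding R_def using card_SigmaI[OF finC finN] by simp
      also have "\<dots> = card C * eta" using eq unfolding deg_def by simp
      finally have cR: "card R = card C * eta" .
      have "finite R" unfolding R_def using finC finN by auto
      moreover have "sym R"
        unfolding sym_def R_def
      proof (intro allI impI)
        fix x y assume "(x,y) \<in> Sigma C (nbrs P E)"
        then have xC: "x \<in> C" and y: "y \<in> nbrs P E x" by auto
        have yC: "y \<in> C" using sub[OF xC] y by auto
        have "(y,x) \<in> E" using y net(2) unfolding nbrs_def by (auto dest: symD)
        then have "x \<in> nbrs P E y" using xC CA unfolding nbrs_def by auto
        then show "(y,x) \<in> Sigma C (nbrs P E)" using yC by auto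
      qed
      moreover have "irrefl R" unfolding irrefl_def R_def using net(3) unfolding nbrs_def irrefl_def by auto
      ultimately have "even (card R)" by (rule even_sym_card)
      then show False using cR oddC assms(4) by simp
    qed
  qed
qed



theorem proposition3:
  fixes P :: "'a ssn" and E :: "('a \<times> 'a) set" and eta :: nat
  assumes "sym_ssn P eta"
    and "evolved P E"
    and "odd eta"
    and "card (components P E) \<ge> 2"
    and "\<exists>C1\<in>components P E. \<exists>C2\<in>components P E. C1 \<noteq> C2 \<and>
           (card C1 \<le> eta \<or> (odd (card C1) \<and> card C1 > eta)) \<and>
           (card C2 \<le> eta \<or> (odd (card C2) \<and> card C2 > eta))"
  shows "\<not> bilat_stable P E"
proof
  assume st: "bilat_stable P E"
  have inv: "is_network P E" "\<forall>l\<in>agents P. deg P E l \<le> eta"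
    using evolved_inv[OF assms(1,2)] by auto
  have sE: "sym E" using inv(1) unfolding is_network_def by auto
  have cdef: "components P E = comp P E ` agents P" unfolding components_def comp_def by simp
  obtain C1 C2 where C: "C1 \<in> components P E" "C2 \<in> components P E" "C1 \<noteq> C2"
    "card C1 \<le> eta \<or> (odd (card C1) \<and> card C1 > eta)"
    "card C2 \<le> eta \<or> (odd (card C2) \<and> card C2 > eta)" using assms(5) by blast
  obtain a1 where a1: "a1 \<in> agents P" "C1 = comp P E a1" using C(1) cdef by auto
  obtain a2 where a2: "a2 \<in> agents P" "C2 = comp P E a2" using C(2) cdef by auto
  obtain i where i: "i \<in> C1" "deg P E i < eta" using comp_low[OF assms(1) inv assms(3) a1 C(4)] by blast
  obtain j where j: "j \<in> C2" "deg P E j < eta" using comp_low[OF assms(1) inv assms(3) a2 C(5)] by blast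
  have iA: "i \<in> agents P" using i(1) a1(2) unfolding comp_def by auto
  have jA: "j \<in> agents P" using j(1) a2(2) unfolding comp_def by auto
  have ci: "comp P E i = C1" using comp_eq[OF sE] i(1) a1(2) by simp
  have cj: "comp P E j = C2" using comp_eq[OF sE] j(1) a2(2) by simp
  have ne: "i \<noteq> j" using ci cj C(3) by auto
  have nE: "(i,j) \<notin> E"
  proof
    assume "(i,j) \<in> E"
    then have "j \<in> comp P E i" using jA unfolding comp_def by auto
    then have "comp P E j = comp P E i" using comp_eq[OF sE] by simp
    then show False using ci cj C(3) by simp
  qed
  have nE': "(j,i) \<notin> E" using nE sE unfolding sym_def by blast
  have w1: "willing P E i j" by (rule willing_low[OF assms(1) iA jA ne nE i(2) j(2)])
  have w2: "willing P E j i" by (rule willing_low[OF assms(1) jA iA ne[symmetric] nE' j(2) i(2)])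
  have "\<not> willing P E j i" using st iA jA ne nE w1 unfolding bilat_stable_def by blast
  then show False using w2 by simp
qed

end
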